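(* Let $B$ be a board with specified sink locations. Then $B$ admits a perfect layout if and only if it is possible to assign a color to each non-sink cell of $B$ such that, for every color $i$, the graph $G_i$ is connected.
   Context: A board is an $m\times n$ grid of unit cells in which exactly $c$ cells are sinks, one of each of $c$ colors, and all other cells are empty. A layout places, in some of the empty cells, arrows, each having one of the $c$ colors and one of the four cardinal directions. A packet of color $i$ may enter the grid through any unit edge of the outer boundary of the grid, into the adjacent cell, moving perpendicular to that edge into the grid; it moves one cell at a time in its current direction, and whenever it enters a cell containing an arrow of color $i$ its direction becomes that arrow's direction (arrows of other colors are ignored). The packet succeeds if it enters the sink of color $i$; it fails if it enters a sink of another color, leaves the grid, or travels forever without reaching a sink. A perfect layout is a layout in which every packet of every color entering through every boundary edge succeeds. Given a coloring of all cells of $B$ that agrees with the colors of the sinks, let $C_i$ be the set of cells of color $i$ (including the sink of color $i$) and $\partial B$ the set of unit edges on the boundary of $B$. Two cells of $C_i$, or a cell of $C_i$ and a boundary edge $e\in\partial B$, are visible to each other if they lie in the same row or same column (for a boundary edge: it is an end edge of that row or column) and no sink of a color other than $i$ lies strictly between them. $G_i$ is the graph on vertex set $C_i\cup\partial B$ with an edge between every pair of mutually visible vertices. *)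

theory Defs
  imports Main
begin

text \<open>Cells are pairs (row, column) of integers; the board is the m x n grid
  {0..<m} x {0..<n}.  Colours are the naturals 0..<c; sink i is the sink of colour i.\<close>

datatype dir = North | South | East | West

definition delta :: "dir \<Rightarrow> int \<times> int" where
  "delta d = (case d of North \<Rightarrow> (-1, 0) | South \<Rightarrow> (1, 0) | East \<Rightarrow> (0, 1) | West \<Rightarrow> (0, -1))"

definition shift :: "int \<times> int \<Rightarrow> dir \<Rightarrow> int \<Rightarrow> int \<times> int" where
  "shift p d t = (fst p + t * fst (delta d), snd p + t * snd (delta d))"

definition grid :: "nat \<Rightarrow> nat \<Rightarrow> (int \<times> int) set" where
  "grid m n = {p. 0 \<le> fst p \<and> fst p < int m \<and> 0 \<le> snd p \<and> snd p < int n}"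

definition board :: "nat \<Rightarrow> nat \<Rightarrow> nat \<Rightarrow> (nat \<Rightarrow> int \<times> int) \<Rightarrow> bool" where
  "board m n c sink \<longleftrightarrow> inj_on sink {..<c} \<and> sink ` {..<c} \<subseteq> grid m n"

definition is_sink :: "nat \<Rightarrow> (nat \<Rightarrow> int \<times> int) \<Rightarrow> int \<times> int \<Rightarrow> bool" where
  "is_sink c sink p \<longleftrightarrow> (\<exists>j<c. sink j = p)"

text \<open>Boundary edges of the grid, each represented by the adjacent cell together with the
  direction pointing into the grid (perpendicular to the edge).\<close>
definition boundary_edges :: "nat \<Rightarrow> nat \<Rightarrow> ((int \<times> int) \<times> dir) set" where
  "boundary_edges m n =
     {((r, 0), East) | r. 0 \<le> r \<and> r < int m \<and> 0 < n} \<union>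
     {((r, int n - 1), West) | r. 0 \<le> r \<and> r < int m \<and> 0 < n} \<union>
     {((0, k), South) | k. 0 \<le> k \<and> k < int n \<and> 0 < m} \<union>
     {((int m - 1, k), North) | k. 0 \<le> k \<and> k < int n \<and> 0 < m}"

type_synonym layout = "int \<times> int \<Rightarrow> (nat \<times> dir) option"

definition valid_layout :: "nat \<Rightarrow> nat \<Rightarrow> nat \<Rightarrow> (nat \<Rightarrow> int \<times> int) \<Rightarrow> layout \<Rightarrow> bool" where
  "valid_layout m n c sink L \<longleftrightarrow>
     (\<forall>p a d. L p = Some (a, d) \<longrightarrow> p \<in> grid m n \<and> \<not> is_sink c sink p \<and> a < c)"

definition eff_dir :: "layout \<Rightarrow> nat \<Rightarrow> int \<times> int \<Rightarrow> dir \<Rightarrow> dir" where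
  "eff_dir L i p d = (case L p of Some (a, d') \<Rightarrow> (if a = i then d' else d) | None \<Rightarrow> d)"

text \<open>State = (cell just entered, direction of motion when entering it).\<close>
definition pstep :: "layout \<Rightarrow> nat \<Rightarrow> (int \<times> int) \<times> dir \<Rightarrow> (int \<times> int) \<times> dir" where
  "pstep L i s = (let d' = eff_dir L i (fst s) (snd s) in (shift (fst s) d' 1, d'))"

definition traj :: "layout \<Rightarrow> nat \<Rightarrow> (int \<times> int) \<times> dir \<Rightarrow> nat \<Rightarrow> (int \<times> int) \<times> dir" where
  "traj L i e k = (pstep L i ^^ k) e"

definition succeeds :: "nat \<Rightarrow> nat \<Rightarrow> nat \<Rightarrow> (nat \<Rightarrow> int \<times> int) \<Rightarrow> layout \<Rightarrow> nat
    \<Rightarrow> (int \<times> int) \<times> dir \<Rightarrow> bool" where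
  "succeeds m n c sink L i e \<longleftrightarrow>
     (\<exists>k. fst (traj L i e k) = sink i \<and>
          (\<forall>j<k. fst (traj L i e j) \<in> grid m n \<and> \<not> is_sink c sink (fst (traj L i e j))))"

definition perfect_layout :: "nat \<Rightarrow> nat \<Rightarrow> nat \<Rightarrow> (nat \<Rightarrow> int \<times> int) \<Rightarrow> layout \<Rightarrow> bool" where
  "perfect_layout m n c sink L \<longleftrightarrow> valid_layout m n c sink L \<and>
     (\<forall>i<c. \<forall>e\<in>boundary_edges m n. succeeds m n c sink L i e)"

definition coloring :: "nat \<Rightarrow> nat \<Rightarrow> nat \<Rightarrow> (nat \<Rightarrow> int \<times> int) \<Rightarrow> (int \<times> int \<Rightarrow> nat) \<Rightarrow> bool" where
  "coloring m n c sink col \<longleftrightarrow> (\<forall>p\<in>grid m n. col p < c) \<and> (\<forall>j<c. col (sink j) = j)"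

definition color_class :: "nat \<Rightarrow> nat \<Rightarrow> (int \<times> int \<Rightarrow> nat) \<Rightarrow> nat \<Rightarrow> (int \<times> int) set" where
  "color_class m n col i = {p \<in> grid m n. col p = i}"

definition other_sink :: "nat \<Rightarrow> (nat \<Rightarrow> int \<times> int) \<Rightarrow> nat \<Rightarrow> int \<times> int \<Rightarrow> bool" where
  "other_sink c sink i x \<longleftrightarrow> (\<exists>j<c. j \<noteq> i \<and> sink j = x)"

definition strictly_between :: "int \<times> int \<Rightarrow> int \<times> int \<Rightarrow> int \<times> int \<Rightarrow> bool" where
  "strictly_between p q x \<longleftrightarrow>
     (fst p = fst q \<and> fst x = fst p \<and> min (snd p) (snd q) < snd x \<and> snd x < max (snd p) (snd q)) \<or>
     (snd p = snd q \<and> snd x = snd p \<and> min (fst p) (fst q) < fst x \<and> fst x < max (fst p) (fst q))"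

definition cells_visible :: "nat \<Rightarrow> (nat \<Rightarrow> int \<times> int) \<Rightarrow> nat \<Rightarrow> int \<times> int \<Rightarrow> int \<times> int \<Rightarrow> bool" where
  "cells_visible c sink i p q \<longleftrightarrow> p \<noteq> q \<and> (fst p = fst q \<or> snd p = snd q) \<and>
     (\<forall>x. strictly_between p q x \<longrightarrow> \<not> other_sink c sink i x)"

text \<open>Cell p and boundary edge e = (q, d): p lies in the row/column of which e is an end edge
  (p = q + t*d, t \<ge> 0), and no sink of another colour lies strictly between them, i.e. among
  the cells q + s*d, 0 \<le> s < t.\<close>
definition edge_visible :: "nat \<Rightarrow> (nat \<Rightarrow> int \<times> int) \<Rightarrow> nat \<Rightarrow> int \<times> int \<Rightarrow> (int \<times> int) \<times> dir \<Rightarrow> bool" where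
  "edge_visible c sink i p e \<longleftrightarrow> (\<exists>t\<ge>0. p = shift (fst e) (snd e) t \<and>
     (\<forall>s. 0 \<le> s \<and> s < t \<longrightarrow> \<not> other_sink c sink i (shift (fst e) (snd e) s)))"

text \<open>The graph G_i on vertex set C_i \<union> \<partial>B (cells as Inl, boundary edges as Inr).\<close>
definition G_adj :: "nat \<Rightarrow> nat \<Rightarrow> nat \<Rightarrow> (nat \<Rightarrow> int \<times> int) \<Rightarrow> (int \<times> int \<Rightarrow> nat) \<Rightarrow> nat
    \<Rightarrow> (int \<times> int) + ((int \<times> int) \<times> dir) \<Rightarrow> (int \<times> int) + ((int \<times> int) \<times> dir) \<Rightarrow> bool" where
  "G_adj m n c sink col i u v \<longleftrightarrow>
     (case (u, v) of
        (Inl p, Inl q) \<Rightarrow> p \<in> color_class m n col i \<and> q \<in> color_class m n col i \<and> cells_visible c sink i p q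
      | (Inl p, Inr e) \<Rightarrow> p \<in> color_class m n col i \<and> e \<in> boundary_edges m n \<and> edge_visible c sink i p e
      | (Inr e, Inl p) \<Rightarrow> p \<in> color_class m n col i \<and> e \<in> boundary_edges m n \<and> edge_visible c sink i p e
      | (Inr _, Inr _) \<Rightarrow> False)"

definition G_vertices :: "nat \<Rightarrow> nat \<Rightarrow> (int \<times> int \<Rightarrow> nat) \<Rightarrow> nat \<Rightarrow> ((int \<times> int) + ((int \<times> int) \<times> dir)) set" where
  "G_vertices m n col i = color_class m n col i <+> boundary_edges m n"

definition G_connected :: "nat \<Rightarrow> nat \<Rightarrow> nat \<Rightarrow> (nat \<Rightarrow> int \<times> int) \<Rightarrow> (int \<times> int \<Rightarrow> nat) \<Rightarrow> nat \<Rightarrow> bool" where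
  "G_connected m n c sink col i \<longleftrightarrow>
     (\<forall>u\<in>G_vertices m n col i. \<forall>v\<in>G_vertices m n col i. (G_adj m n c sink col i)\<^sup>*\<^sup>* u v)"

end

theory Submission
  imports Defs
begin



lemma shift_add: "shift (shift p d a) d b = shift p d (a + b)"
  by (simp add: shift_def algebra_simps)

lemma shift_0[simp]: "shift p d 0 = p"
  by (simp add: shift_def)

lemma shift_cases:
  "shift p North t = (fst p - t, snd p)"
  "shift p South t = (fst p + t, snd p)"
  "shift p East t = (fst p, snd p + t)"
  "shift p West t = (fst p, snd p - t)"
  by (simp_all add: shift_def delta_def)

lemma shift_inj: "shift p d a = shift p d b \<longleftrightarrow> a = b"
  by (cases d) (auto simp: shift_cases prod_eq_iff)


lemma sb_shift:
  assumes "t \<ge> 1"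
  shows "strictly_between p (shift p d (int t)) x \<longleftrightarrow> (\<exists>s::nat. 0<s \<and> s<t \<and> x = shift p d (int s))"
proof (cases x)
  case (Pair a b)
  show ?thesis
  proof (cases d)
    case North
    show ?thesis
    proof
      assume "strictly_between p (shift p d (int t)) x"
      then have "b = snd p" "fst p - int t < a" "a < fst p" using assms Pair North
        by (auto simp: strictly_between_def shift_cases)
      then show "\<exists>s::nat. 0<s \<and> s<t \<and> x = shift p d (int s)" using Pair North
        by (intro exI[of _ "nat (fst p - a)"]) (auto simp: shift_cases)
    qed (use assms North in \<open>auto simp: strictly_between_def shift_cases\<close>)
  next
    case South
    show ?thesis
    proof
      assume "strictly_between p (shift p d (int t)) x"
      then have "b = snd p" "fst p + int t > a" "a > fst p" using assms Pair South
        by (auto simp: strictly_between_def shift_cases)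
      then show "\<exists>s::nat. 0<s \<and> s<t \<and> x = shift p d (int s)" using Pair South
        by (intro exI[of _ "nat (a - fst p)"]) (auto simp: shift_cases)
    qed (use assms South in \<open>auto simp: strictly_between_def shift_cases\<close>)
  next
    case East
    show ?thesis
    proof
      assume "strictly_between p (shift p d (int t)) x"
      then have "a = fst p" "snd p + int t > b" "b > snd p" using assms Pair East
        by (auto simp: strictly_between_def shift_cases)
      then show "\<exists>s::nat. 0<s \<and> s<t \<and> x = shift p d (int s)" using Pair East
        by (intro exI[of _ "nat (b - snd p)"]) (auto simp: shift_cases)
    qed (use assms East in \<open>auto simp: strictly_between_def shift_cases\<close>)
  next
    case West
    show ?thesis
    proof
      assume "strictly_between p (shift p d (int t)) x"
      then have "a = fst p" "snd p - int t < b" "b < snd p" using assms Pair West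
        by (auto simp: strictly_between_def shift_cases)
      then show "\<exists>s::nat. 0<s \<and> s<t \<and> x = shift p d (int s)" using Pair West
        by (intro exI[of _ "nat (snd p - b)"]) (auto simp: shift_cases)
    qed (use assms West in \<open>auto simp: strictly_between_def shift_cases\<close>)
  qed
qed


lemma visible_ray:
  "cells_visible c sink i p q \<longleftrightarrow>
   (\<exists>d (t::nat). t \<ge> 1 \<and> q = shift p d (int t) \<and>
      (\<forall>s::nat. 0<s \<and> s<t \<longrightarrow> \<not> other_sink c sink i (shift p d (int s))))"
proof
  assume "cells_visible c sink i p q"
  then have ne: "p \<noteq> q" and rc: "fst p = fst q \<or> snd p = snd q"
    and nb: "\<And>x. strictly_between p q x \<Longrightarrow> \<not> other_sink c sink i x"
    by (auto simp: cells_visible_def)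
  have "\<exists>d (t::nat). t \<ge> 1 \<and> q = shift p d (int t)"
  proof (cases "fst p = fst q")
    case True
    then have "snd p \<noteq> snd q" using ne by (auto simp: prod_eq_iff)
    then show ?thesis
    proof (cases "snd p < snd q")
      case True
      then show ?thesis using \<open>fst p = fst q\<close>
        by (intro exI[of _ East] exI[of _ "nat (snd q - snd p)"]) (auto simp: shift_cases prod_eq_iff)
    next
      case False
      then show ?thesis using \<open>fst p = fst q\<close> \<open>snd p \<noteq> snd q\<close>
        by (intro exI[of _ West] exI[of _ "nat (snd p - snd q)"]) (auto simp: shift_cases prod_eq_iff)
    qed
  next
    case False
    then have s: "snd p = snd q" using rc by auto
    then show ?thesis
    proof (cases "fst p < fst q")
      case True
      then show ?thesis using s
        by (intro exI[of _ South] exI[of _ "nat (fst q - fst p)"]) (auto simp: shift_cases prod_eq_iff)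
    next
      case False
      then show ?thesis using s \<open>fst p \<noteq> fst q\<close>
        by (intro exI[of _ North] exI[of _ "nat (fst p - fst q)"]) (auto simp: shift_cases prod_eq_iff)
    qed
  qed
  then obtain d t where t: "t \<ge> (1::nat)" "q = shift p d (int t)" by blast
  show "\<exists>d (t::nat). t \<ge> 1 \<and> q = shift p d (int t) \<and>
      (\<forall>s::nat. 0<s \<and> s<t \<longrightarrow> \<not> other_sink c sink i (shift p d (int s)))"
  proof -
    have "\<forall>s::nat. 0<s \<and> s<t \<longrightarrow> \<not> other_sink c sink i (shift p d (int s))"
    proof (intro allI impI)
      fix s :: nat assume "0<s \<and> s<t"
      then have "strictly_between p q (shift p d (int s))"
        unfolding t(2) by (subst sb_shift[OF t(1)]) blast
      then show "\<not> other_sink c sink i (shift p d (int s))" by (rule nb)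
    qed
    then show ?thesis using t by blast
  qed
next
  assume "\<exists>d (t::nat). t \<ge> 1 \<and> q = shift p d (int t) \<and>
      (\<forall>s::nat. 0<s \<and> s<t \<longrightarrow> \<not> other_sink c sink i (shift p d (int s)))"
  then obtain d t where t: "t \<ge> (1::nat)" "q = shift p d (int t)"
    and nb: "\<forall>s::nat. 0<s \<and> s<t \<longrightarrow> \<not> other_sink c sink i (shift p d (int s))" by blast
  have "p \<noteq> q" using t shift_inj[of p d 0 "int t"] by auto
  moreover have "fst p = fst q \<or> snd p = snd q" using t by (cases d) (auto simp: shift_cases)
  moreover have "\<forall>x. strictly_between p q x \<longrightarrow> \<not> other_sink c sink i x"
  proof (intro allI impI)
    fix x assume "strictly_between p q x"
    then obtain s :: nat where "0<s" "s<t" "x = shift p d (int s)"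
      unfolding t(2) by (subst (asm) sb_shift[OF t(1)]) blast
    then show "\<not> other_sink c sink i x" using nb by blast
  qed
  ultimately show "cells_visible c sink i p q" by (simp add: cells_visible_def)
qed


lemma edge_vis_nat:
  "edge_visible c sink i p e \<longleftrightarrow> (\<exists>t::nat. p = shift (fst e) (snd e) (int t) \<and>
      (\<forall>s::nat. s<t \<longrightarrow> \<not> other_sink c sink i (shift (fst e) (snd e) (int s))))"
proof
  assume "edge_visible c sink i p e"
  then obtain t where t: "t \<ge> 0" "p = shift (fst e) (snd e) t"
    "\<forall>s. 0 \<le> s \<and> s < t \<longrightarrow> \<not> other_sink c sink i (shift (fst e) (snd e) s)"
    by (auto simp: edge_visible_def)
  show "\<exists>t::nat. p = shift (fst e) (snd e) (int t) \<and>
      (\<forall>s::nat. s<t \<longrightarrow> \<not> other_sink c sink i (shift (fst e) (snd e) (int s)))"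
    using t by (intro exI[of _ "nat t"]) auto
next
  assume "\<exists>t::nat. p = shift (fst e) (snd e) (int t) \<and>
      (\<forall>s::nat. s<t \<longrightarrow> \<not> other_sink c sink i (shift (fst e) (snd e) (int s)))"
  then obtain t :: nat where t: "p = shift (fst e) (snd e) (int t)"
      "\<forall>s::nat. s<t \<longrightarrow> \<not> other_sink c sink i (shift (fst e) (snd e) (int s))" by blast
  show "edge_visible c sink i p e" unfolding edge_visible_def
  proof (intro exI[of _ "int t"] conjI allI impI)
    fix s :: int assume "0 \<le> s \<and> s < int t"
    then show "\<not> other_sink c sink i (shift (fst e) (snd e) s)"
    proof -
      have "int (nat s) = s" using \<open>0 \<le> s \<and> s < int t\<close> by auto
      moreover have "nat s < t" using \<open>0 \<le> s \<and> s < int t\<close> by (simp add: nat_less_iff)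
      ultimately show ?thesis using t(2)[rule_format, OF \<open>nat s < t\<close>] by simp
    qed
  qed (use t in auto)
qed


lemma strictly_between_sym: "strictly_between p q x \<longleftrightarrow> strictly_between q p x"
  by (auto simp: strictly_between_def min.commute max.commute)

lemma cells_visible_sym: "cells_visible c sink i p q \<longleftrightarrow> cells_visible c sink i q p"
  unfolding cells_visible_def using strictly_between_sym by metis

lemma G_adj_sym: "G_adj m n c sink col i u v \<Longrightarrow> G_adj m n c sink col i v u"
  by (cases u; cases v) (auto simp: G_adj_def cells_visible_sym)

lemma grid_convex:
  assumes "q \<in> grid m n" "shift q d (int t) \<in> grid m n" "s \<le> t"
  shows "shift q d (int s) \<in> grid m n"
  using assms by (cases d) (auto simp: grid_def shift_cases)

lemma traj_add: "traj L i st (a + b) = traj L i (traj L i st a) b"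
  unfolding traj_def by (metis add.commute comp_apply funpow_add)

lemma traj_Suc: "traj L i st (Suc j) = pstep L i (traj L i st j)"
  by (simp add: traj_def)

lemma traj_0[simp]: "traj L i st 0 = st"
  by (simp add: traj_def)




lemma bd_grid: "e \<in> boundary_edges m n \<Longrightarrow> fst e \<in> grid m n"
  by (auto simp: boundary_edges_def grid_def)

locale bdc =
  fixes m n c :: nat and sink :: "nat \<Rightarrow> int \<times> int" and col :: "int \<times> int \<Rightarrow> nat"
  assumes board: "board m n c sink" and c1: "1 \<le> c"
    and colo: "coloring m n c sink col" and conn: "\<forall>i<c. G_connected m n c sink col i"
begin

lemma sink_grid: "j < c \<Longrightarrow> sink j \<in> grid m n"
  using board by (auto simp: board_def)

lemma col_sink: "j < c \<Longrightarrow> col (sink j) = j"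
  using colo by (auto simp: coloring_def)

lemma sink_cc: "j < c \<Longrightarrow> sink j \<in> color_class m n col j"
  by (simp add: color_class_def sink_grid col_sink)

lemma sink_cc_eq: "is_sink c sink p \<Longrightarrow> p \<in> color_class m n col i \<Longrightarrow> p = sink i \<and> i < c"
  by (auto simp: is_sink_def color_class_def col_sink)

lemma other_of_sink: "is_sink c sink x \<Longrightarrow> col x \<noteq> i \<Longrightarrow> other_sink c sink i x"
  by (auto simp: is_sink_def other_sink_def col_sink)

definition hit :: "nat \<Rightarrow> int \<times> int \<Rightarrow> dir \<Rightarrow> nat \<Rightarrow> int \<times> int \<Rightarrow> bool" where
  "hit i b d s0 q \<longleftrightarrow> (\<exists>t::nat. t \<ge> s0 \<and> q = shift b d (int t) \<and> q \<in> color_class m n col i \<and>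
     (\<forall>s::nat. s0 \<le> s \<and> s < t \<longrightarrow> shift b d (int s) \<in> grid m n \<and>
        \<not> is_sink c sink (shift b d (int s)) \<and> col (shift b d (int s)) \<noteq> i))"

inductive lv :: "nat \<Rightarrow> int \<times> int \<Rightarrow> nat \<Rightarrow> bool" for i :: nat where
  lv0: "lv i (sink i) 0"
| lvS: "lv i q k \<Longrightarrow> hit i p d 1 q \<Longrightarrow> p \<in> color_class m n col i \<Longrightarrow> \<not> is_sink c sink p
        \<Longrightarrow> lv i p (Suc k)"

lemma lv_cc: "lv i p k \<Longrightarrow> i < c \<Longrightarrow> p \<in> color_class m n col i"
  by (induction rule: lv.induct) (auto simp: sink_cc)

lemma first_hit:
  assumes i: "i < c" and q: "q \<in> grid m n" and p: "p \<in> color_class m n col i"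
    and pt: "p = shift q d (int t)" and s0t: "s0 \<le> t"
    and nb: "\<forall>s::nat. s0 \<le> s \<and> s < t \<longrightarrow> \<not> other_sink c sink i (shift q d (int s))"
  obtains t' where "s0 \<le> t'" "t' \<le> t" "hit i q d s0 (shift q d (int t'))"
proof -
  define t' where "t' = (LEAST s::nat. s0 \<le> s \<and> shift q d (int s) \<in> color_class m n col i)"
  have ex: "s0 \<le> t \<and> shift q d (int t) \<in> color_class m n col i" using p pt s0t by simp
  have 1: "s0 \<le> t' \<and> shift q d (int t') \<in> color_class m n col i"
    unfolding t'_def by (rule LeastI[of _ t], rule ex)
  have 2: "t' \<le> t" unfolding t'_def by (rule Least_le, rule ex)
  have pg: "p \<in> grid m n" using p by (simp add: color_class_def)
  have "hit i q d s0 (shift q d (int t'))"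
    unfolding hit_def
  proof (intro exI[of _ t'] conjI allI impI)
    fix s :: nat assume s: "s0 \<le> s \<and> s < t'"
    show g: "shift q d (int s) \<in> grid m n"
      using grid_convex[OF q, of d t s] pg pt s 2 by auto
    have "\<not> (s0 \<le> s \<and> shift q d (int s) \<in> color_class m n col i)"
      using not_less_Least[of s "\<lambda>s. s0 \<le> s \<and> shift q d (int s) \<in> color_class m n col i"] s
      unfolding t'_def by blast
    then show cn: "col (shift q d (int s)) \<noteq> i" using s g by (auto simp: color_class_def)
    show "\<not> is_sink c sink (shift q d (int s))"
      using other_of_sink[OF _ cn] nb s 2 by auto
  qed (use 1 in auto)
  then show ?thesis using that 1 2 by blast
qed

lemma lv_vis_ray:
  assumes i: "i < c"
  shows "lv i p k \<Longrightarrow> p = shift q d (int t) \<Longrightarrow> t \<ge> 1 \<Longrightarrow> q \<in> color_class m n col i \<Longrightarrow>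
    (\<forall>s::nat. 0<s \<and> s<t \<longrightarrow> \<not> other_sink c sink i (shift q d (int s))) \<Longrightarrow> \<exists>k. lv i q k"
proof (induction t arbitrary: q rule: less_induct)
  case (less t q)
  show ?case
  proof (cases "is_sink c sink q")
    case True
    then have "q = sink i" using sink_cc_eq less.prems by blast
    then show ?thesis using lv0 by blast
  next
    case ns: False
    have qg: "q \<in> grid m n" using less.prems by (simp add: color_class_def)
    have pc: "p \<in> color_class m n col i" using lv_cc[OF less.prems(1) i] .
    obtain t' where t': "1 \<le> t'" "t' \<le> t" "hit i q d 1 (shift q d (int t'))"
      using first_hit[OF i qg pc less.prems(2) less.prems(3)] less.prems(5) by auto
    show ?thesis
    proof (cases "t' = t")
      case True
      then show ?thesis using t' lvS[OF less.prems(1) _ less.prems(4) ns] less.prems(2) by auto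
    next
      case False
      define r where "r = shift q d (int t')"
      have rc: "r \<in> color_class m n col i" using t'(3) by (auto simp: hit_def r_def)
      have pr: "p = shift r d (int (t - t'))"
        using less.prems(2) False t' by (simp add: r_def shift_add of_nat_diff)
      have "\<exists>k. lv i r k"
      proof (rule less.IH[of "t - t'" r])
        show "t - t' < t" using t' False by auto
        show "\<forall>s::nat. 0<s \<and> s<t - t' \<longrightarrow> \<not> other_sink c sink i (shift r d (int s))"
        proof (intro allI impI)
          fix s :: nat assume a: "0<s \<and> s<t - t'"
          then have "t' + s < t" by arith
          then show "\<not> other_sink c sink i (shift r d (int s))"
            using less.prems(5)[rule_format, of "t' + s"] a by (simp add: r_def shift_add)
        qed
      qed (use less.prems pr rc t' False in auto)
      then obtain k' where "lv i r k'" by blast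
      then have "lv i q (Suc k')" using lvS t'(3) less.prems(4) ns r_def by blast
      then show ?thesis by blast
    qed
  qed
qed

lemma lv_vis:
  "i < c \<Longrightarrow> lv i p k \<Longrightarrow> cells_visible c sink i q p \<Longrightarrow> q \<in> color_class m n col i \<Longrightarrow> \<exists>k. lv i q k"
  unfolding visible_ray using lv_vis_ray by blast

end



context bdc begin

lemma edge_to_hit:
  assumes i: "i < c" and lp: "lv i p k" and eg: "fst e \<in> grid m n"
    and pt: "p = shift (fst e) (snd e) (int t)"
    and nb: "\<forall>s::nat. s<t \<longrightarrow> \<not> other_sink c sink i (shift (fst e) (snd e) (int s))"
  shows "\<exists>r k'. hit i (fst e) (snd e) 0 r \<and> lv i r k'"
proof -
  have pc: "p \<in> color_class m n col i" using lv_cc[OF lp i] .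
  obtain t' where t': "t' \<le> t" "hit i (fst e) (snd e) 0 (shift (fst e) (snd e) (int t'))"
    using first_hit[OF i eg pc pt, of 0] nb by auto
  show ?thesis
  proof (cases "t' = t")
    case True
    then show ?thesis using t' lp pt by blast
  next
    case False
    define r where "r = shift (fst e) (snd e) (int t')"
    have rc: "r \<in> color_class m n col i" using t'(2) by (auto simp: hit_def r_def)
    have pr: "p = shift r (snd e) (int (t - t'))"
      using pt False t' by (simp add: r_def shift_add of_nat_diff)
    have "\<exists>k. lv i r k"
    proof (rule lv_vis_ray[OF i lp pr _ rc])
      show "1 \<le> t - t'" using t' False by auto
      show "\<forall>s::nat. 0<s \<and> s<t - t' \<longrightarrow> \<not> other_sink c sink i (shift r (snd e) (int s))"
      proof (intro allI impI)
        fix s :: nat assume a: "0<s \<and> s<t - t'"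
        then have "t' + s < t" by arith
        then show "\<not> other_sink c sink i (shift r (snd e) (int s))"
          using nb[rule_format, of "t' + s"] a by (simp add: r_def shift_add)
      qed
    qed
    then show ?thesis using t'(2) r_def by blast
  qed
qed

lemma hit_to_edge:
  assumes i: "i < c" and h: "hit i (fst e) (snd e) 0 r" and lr: "lv i r k"
    and pc: "p \<in> color_class m n col i"
    and pt: "p = shift (fst e) (snd e) (int t)"
    and nb: "\<forall>s::nat. s<t \<longrightarrow> \<not> other_sink c sink i (shift (fst e) (snd e) (int s))"
  shows "\<exists>k. lv i p k"
proof -
  obtain tr where tr: "r = shift (fst e) (snd e) (int tr)"
    "\<forall>s::nat. s < tr \<longrightarrow> col (shift (fst e) (snd e) (int s)) \<noteq> i"
    using h by (auto simp: hit_def)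
  have "\<not> t < tr" using tr(2) pc pt by (auto simp: color_class_def)
  then have le: "tr \<le> t" by simp
  show ?thesis
  proof (cases "tr = t")
    case True
    then show ?thesis using lr tr pt by blast
  next
    case False
    have pr: "p = shift r (snd e) (int (t - tr))"
      using pt False le by (simp add: tr shift_add of_nat_diff)
    have "cells_visible c sink i r p"
      unfolding visible_ray
    proof (intro exI conjI)
      show "1 \<le> t - tr" using le False by auto
      show "\<forall>s::nat. 0<s \<and> s<t - tr \<longrightarrow> \<not> other_sink c sink i (shift r (snd e) (int s))"
      proof (intro allI impI)
        fix s :: nat assume a: "0<s \<and> s<t - tr"
        then have "tr + s < t" by arith
        then show "\<not> other_sink c sink i (shift r (snd e) (int s))"
          using nb[rule_format, of "tr + s"] a by (simp add: tr shift_add)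
      qed
    qed (rule pr)
    then show ?thesis using lv_vis[OF i lr] cells_visible_sym pc by blast
  qed
qed

definition Good :: "nat \<Rightarrow> (int \<times> int) + ((int \<times> int) \<times> dir) \<Rightarrow> bool" where
  "Good i v = (case v of Inl p \<Rightarrow> \<exists>k. lv i p k
     | Inr e \<Rightarrow> \<exists>r k. hit i (fst e) (snd e) 0 r \<and> lv i r k)"

lemma good_step:
  assumes i: "i < c" and a: "G_adj m n c sink col i u v" and g: "Good i u"
  shows "Good i v"
proof (cases u)
  case (Inl p)
  show ?thesis
  proof (cases v)
    case (Inl q)
    have "q \<in> color_class m n col i" "cells_visible c sink i q p"
      using a Inl \<open>u = Inl p\<close> cells_visible_sym by (auto simp: G_adj_def)
    moreover obtain k where "lv i p k" using g \<open>u = Inl p\<close> by (auto simp: Good_def)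
    ultimately show ?thesis using lv_vis[OF i] Inl by (auto simp: Good_def)
  next
    case (Inr e)
    have "e \<in> boundary_edges m n" "edge_visible c sink i p e"
      using a Inl Inr by (auto simp: G_adj_def)
    then obtain t where t: "p = shift (fst e) (snd e) (int t)"
      "\<forall>s::nat. s<t \<longrightarrow> \<not> other_sink c sink i (shift (fst e) (snd e) (int s))"
      by (auto simp: edge_vis_nat)
    obtain k where "lv i p k" using g Inl by (auto simp: Good_def)
    from edge_to_hit[OF i this bd_grid[OF \<open>e \<in> boundary_edges m n\<close>] t]
    show ?thesis using Inr by (simp add: Good_def)
  qed
next
  case (Inr e)
  show ?thesis
  proof (cases v)
    case (Inl p)
    have "p \<in> color_class m n col i" "edge_visible c sink i p e"
      using a Inl Inr by (auto simp: G_adj_def)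
    then obtain t where t: "p = shift (fst e) (snd e) (int t)"
      "\<forall>s::nat. s<t \<longrightarrow> \<not> other_sink c sink i (shift (fst e) (snd e) (int s))"
      by (auto simp: edge_vis_nat)
    obtain r k where "hit i (fst e) (snd e) 0 r" "lv i r k" using g Inr by (auto simp: Good_def)
    from hit_to_edge[OF i this \<open>p \<in> color_class m n col i\<close> t]
    show ?thesis using Inl by (simp add: Good_def)
  next
    case (Inr e')
    then show ?thesis using a \<open>u = Inr e\<close> by (auto simp: G_adj_def)
  qed
qed

lemma all_good:
  assumes i: "i < c" and v: "v \<in> G_vertices m n col i"
  shows "Good i v"
proof -
  have "(G_adj m n c sink col i)\<^sup>*\<^sup>* (Inl (sink i)) v"
    using conn i v sink_cc[OF i] by (auto simp: G_connected_def G_vertices_def)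
  then show ?thesis
  proof (induction rule: rtranclp_induct)
    case base
    then show ?case using lv0 by (auto simp: Good_def)
  next
    case (step y z)
    then show ?case using good_step[OF i] by blast
  qed
qed

end



context bdc begin

definition lvl :: "nat \<Rightarrow> int \<times> int \<Rightarrow> nat" where
  "lvl i p = (LEAST k. lv i p k)"

definition dirf :: "nat \<Rightarrow> int \<times> int \<Rightarrow> dir" where
  "dirf i p = (SOME d. \<exists>q. hit i p d 1 q \<and> lv i q (lvl i p - 1))"

definition Lay :: layout where
  "Lay p = (if p \<in> grid m n \<and> \<not> is_sink c sink p then Some (col p, dirf (col p) p) else None)"

lemma sink_is_sink: "i < c \<Longrightarrow> is_sink c sink (sink i)"
  by (auto simp: is_sink_def)

lemma lv_zero: "lv i p 0 \<Longrightarrow> p = sink i"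
  by (cases rule: lv.cases) auto

lemma lv_suc: "lv i p (Suc k) \<Longrightarrow> \<exists>d q. hit i p d 1 q \<and> lv i q k"
  by (cases rule: lv.cases) auto

lemma dir_ok:
  assumes i: "i < c" and lp: "lv i p k" and ns: "\<not> is_sink c sink p"
  shows "\<exists>q k'. hit i p (dirf i p) 1 q \<and> lv i q k' \<and> k' < k"
proof -
  have l: "lv i p (lvl i p)" unfolding lvl_def by (rule LeastI[of _ k], rule lp)
  have le: "lvl i p \<le> k" unfolding lvl_def by (rule Least_le, rule lp)
  have "lvl i p \<noteq> 0" using l lv_zero ns sink_is_sink[OF i] by metis
  then obtain k'' where k'': "lvl i p = Suc k''" by (cases "lvl i p") auto
  then have "\<exists>d q. hit i p d 1 q \<and> lv i q (lvl i p - 1)" using lv_suc l by auto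
  then have "\<exists>q. hit i p (dirf i p) 1 q \<and> lv i q (lvl i p - 1)"
    unfolding dirf_def by (rule someI_ex)
  then obtain q where "hit i p (dirf i p) 1 q" "lv i q k''" using k'' by auto
  then show ?thesis using k'' le by (intro exI[of _ q] exI[of _ k'']) auto
qed

definition succ_from :: "nat \<Rightarrow> (int \<times> int) \<times> dir \<Rightarrow> bool" where
  "succ_from i st \<longleftrightarrow> (\<exists>k. fst (traj Lay i st k) = sink i \<and>
      (\<forall>j<k. fst (traj Lay i st j) \<in> grid m n \<and> \<not> is_sink c sink (fst (traj Lay i st j))))"

lemma hit_shift1: "hit i p d 1 q \<Longrightarrow> hit i (shift p d 1) d 0 q"
  unfolding hit_def
proof (elim exE conjE)
  fix t :: nat assume a: "1 \<le> t" "q = shift p d (int t)" "q \<in> color_class m n col i"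
    "\<forall>s. 1 \<le> s \<and> s < t \<longrightarrow> shift p d (int s) \<in> grid m n \<and>
          \<not> is_sink c sink (shift p d (int s)) \<and> col (shift p d (int s)) \<noteq> i"
  show "\<exists>t\<ge>0. q = shift (shift p d 1) d (int t) \<and> q \<in> color_class m n col i \<and>
     (\<forall>s. 0 \<le> s \<and> s < t \<longrightarrow> shift (shift p d 1) d (int s) \<in> grid m n \<and>
        \<not> is_sink c sink (shift (shift p d 1) d (int s)) \<and> col (shift (shift p d 1) d (int s)) \<noteq> i)"
  proof (intro exI[of _ "t - 1"] conjI allI impI)
    show "q = shift (shift p d 1) d (int (t - 1))" using a by (simp add: shift_add of_nat_diff)
    fix s :: nat assume s: "0 \<le> s \<and> s < t - 1"
    have e: "shift (shift p d 1) d (int s) = shift p d (int (Suc s))" by (simp add: shift_add)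
    have h: "shift p d (int (Suc s)) \<in> grid m n \<and>
          \<not> is_sink c sink (shift p d (int (Suc s))) \<and> col (shift p d (int (Suc s))) \<noteq> i"
      by (rule a(4)[rule_format]) (use s in auto)
    show "shift (shift p d 1) d (int s) \<in> grid m n" unfolding e using h by blast
    show "\<not> is_sink c sink (shift (shift p d 1) d (int s))" unfolding e using h by blast
    show "col (shift (shift p d 1) d (int s)) \<noteq> i" unfolding e using h by blast
  qed (use a in auto)
qed

lemma walk:
  assumes i: "i < c" and t: "\<forall>s::nat. s < t \<longrightarrow> shift x d (int s) \<in> grid m n \<and>
        \<not> is_sink c sink (shift x d (int s)) \<and> col (shift x d (int s)) \<noteq> i"
  shows "s \<le> t \<Longrightarrow> traj Lay i (x, d) s = (shift x d (int s), d)"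
proof (induction s)
  case 0
  then show ?case by simp
next
  case (Suc s)
  then have st: "traj Lay i (x, d) s = (shift x d (int s), d)" by simp
  have c: "shift x d (int s) \<in> grid m n \<and> \<not> is_sink c sink (shift x d (int s)) \<and>
      col (shift x d (int s)) \<noteq> i" using t Suc.prems by auto
  then have "eff_dir Lay i (shift x d (int s)) d = d"
    by (auto simp: eff_dir_def Lay_def)
  then show ?case using st by (simp add: traj_Suc pstep_def shift_add Let_def add.commute)
qed

lemma succ:
  assumes i: "i < c"
  shows "lv i q k \<Longrightarrow> hit i x d 0 q \<Longrightarrow> succ_from i (x, d)"
proof (induction k arbitrary: q x d rule: less_induct)
  case (less k q x d)
  obtain t where t: "q = shift x d (int t)" "q \<in> color_class m n col i"
    "\<forall>s::nat. s < t \<longrightarrow> shift x d (int s) \<in> grid m n \<and>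
        \<not> is_sink c sink (shift x d (int s)) \<and> col (shift x d (int s)) \<noteq> i"
    using less.prems(2) by (auto simp: hit_def)
  have w: "\<And>s. s \<le> t \<Longrightarrow> traj Lay i (x, d) s = (shift x d (int s), d)"
    using walk[OF i t(3)] by blast
  show ?case
  proof (cases "is_sink c sink q")
    case True
    then have "q = sink i" using sink_cc_eq t(2) by blast
    then show ?thesis unfolding succ_from_def using w t
      by (intro exI[of _ t]) auto
  next
    case ns: False
    obtain q' k' where q': "hit i q (dirf i q) 1 q'" "lv i q' k'" "k' < k"
      using dir_ok[OF i less.prems(1) ns] by blast
    define D where "D = dirf i q"
    have cq: "col q = i" "q \<in> grid m n" using t(2) by (auto simp: color_class_def)
    have "Lay q = Some (i, D)" using cq ns by (simp add: Lay_def D_def)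
    then have ts: "traj Lay i (x, d) (Suc t) = (shift q D 1, D)"
      using w[of t] t(1) by (simp add: traj_Suc pstep_def eff_dir_def Let_def)
    have "succ_from i (shift q D 1, D)"
      using less.IH[OF q'(3) q'(2)] hit_shift1 q'(1) D_def by blast
    then obtain k3 where k3: "fst (traj Lay i (shift q D 1, D) k3) = sink i"
      "\<forall>j<k3. fst (traj Lay i (shift q D 1, D) j) \<in> grid m n \<and>
          \<not> is_sink c sink (fst (traj Lay i (shift q D 1, D) j))"
      unfolding succ_from_def by blast
    show ?thesis unfolding succ_from_def
    proof (rule exI[of _ "Suc t + k3"], rule conjI)
      show "fst (traj Lay i (x, d) (Suc t + k3)) = sink i"
        using k3 ts traj_add[of Lay i "(x, d)" "Suc t" k3] by simp
      show "\<forall>j<Suc t + k3. fst (traj Lay i (x, d) j) \<in> grid m n \<and> \<not> is_sink c sink (fst (traj Lay i (x, d) j))"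
      proof (intro allI impI)
      fix j assume j: "j < Suc t + k3"
      show "fst (traj Lay i (x, d) j) \<in> grid m n \<and> \<not> is_sink c sink (fst (traj Lay i (x, d) j))"
      proof (cases "j \<le> t")
        case True
        then show ?thesis using w[OF True] t cq ns
          by (cases "j = t") auto
      next
        case False
        then obtain j' where j': "j = Suc t + j'" "j' < k3" using j
          by (metis add_less_imp_less_left le_Suc_ex not_less_eq_eq)
        then show ?thesis using k3(2) ts traj_add[of Lay i "(x, d)" "Suc t" j'] by simp
      qed
      qed
    qed
  qed
qed

lemma perfect: "perfect_layout m n c sink Lay"
  unfolding perfect_layout_def
proof (intro conjI allI impI ballI)
  show "valid_layout m n c sink Lay"
    using colo by (auto simp: valid_layout_def Lay_def coloring_def split: if_splits)
  fix i e assume i: "i < c" and e: "e \<in> boundary_edges m n"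
  have "Good i (Inr e)" by (rule all_good[OF i]) (unfold G_vertices_def, rule InrI, rule e)
  then obtain r k where "hit i (fst e) (snd e) 0 r" "lv i r k" by (auto simp: Good_def)
  then have "succ_from i (fst e, snd e)" using succ[OF i] by blast
  then show "succeeds m n c sink Lay i e" by (simp add: succ_from_def succeeds_def)
qed

end



lemma rtranclp_sym_adj:
  assumes "\<And>u v. R u v \<Longrightarrow> R v u"
  shows "R\<^sup>*\<^sup>* x y \<Longrightarrow> R\<^sup>*\<^sup>* y x"
proof (induction rule: rtranclp_induct)
  case base then show ?case by simp
next
  case (step y z)
  then show ?case using assms converse_rtranclp_into_rtranclp by metis
qed

locale bdl =
  fixes m n c :: nat and sink :: "nat \<Rightarrow> int \<times> int" and L :: layout
  assumes board: "board m n c sink" and c1: "1 \<le> c"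
    and perf: "perfect_layout m n c sink L"
begin

lemma sink_grid: "j < c \<Longrightarrow> sink j \<in> grid m n"
  using board by (auto simp: board_def)

lemma sink_inj: "j < c \<Longrightarrow> j' < c \<Longrightarrow> sink j = sink j' \<Longrightarrow> j = j'"
  using board by (auto simp: board_def inj_on_def)

lemma valid: "L p = Some (a, d) \<Longrightarrow> p \<in> grid m n \<and> \<not> is_sink c sink p \<and> a < c"
  using perf unfolding perfect_layout_def valid_layout_def by blast

definition visited :: "nat \<Rightarrow> int \<times> int \<Rightarrow> bool" where
  "visited i p \<longleftrightarrow> (\<exists>e\<in>boundary_edges m n. \<exists>j. fst (traj L i e j) = p \<and>
     (\<forall>j'\<le>j. fst (traj L i e j') \<in> grid m n \<and> \<not> is_sink c sink (fst (traj L i e j'))))"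

definition freeok :: "nat \<Rightarrow> int \<times> int \<Rightarrow> bool" where
  "freeok i p \<longleftrightarrow> i < c \<and> ((\<exists>e\<in>boundary_edges m n. edge_visible c sink i p e) \<or>
     cells_visible c sink i p (sink i))"

definition colf :: "int \<times> int \<Rightarrow> nat" where
  "colf p = (if is_sink c sink p then (THE j. j < c \<and> sink j = p) else
     (case L p of Some (a, d) \<Rightarrow> if visited a p then a else (SOME i. freeok i p)
      | None \<Rightarrow> (SOME i. freeok i p)))"

lemma colf_sink: "j < c \<Longrightarrow> colf (sink j) = j"
proof -
  assume j: "j < c"
  have "is_sink c sink (sink j)" using j by (auto simp: is_sink_def)
  moreover have "(THE j'. j' < c \<and> sink j' = sink j) = j"
    using j sink_inj by (intro the_equality) auto
  ultimately show ?thesis by (simp add: colf_def)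
qed

lemma free_ex:
  assumes pg: "p \<in> grid m n" and ns: "\<not> is_sink c sink p"
  shows "\<exists>i. freeok i p"
proof (cases "\<exists>s::nat. 1 \<le> s \<and> is_sink c sink (shift p North (int s))")
  case False
  define e where "e = ((0::int, snd p), South)"
  define t where "t = nat (fst p)"
  have eb: "e \<in> boundary_edges m n" using pg by (auto simp: e_def boundary_edges_def grid_def)
  have "edge_visible c sink 0 p e"
    unfolding edge_vis_nat
  proof (intro exI[of _ t] conjI allI impI)
    show "p = shift (fst e) (snd e) (int t)" using pg by (auto simp: e_def t_def shift_cases grid_def)
    fix s :: nat assume s: "s < t"
    have "shift (fst e) (snd e) (int s) = shift p North (int (t - s))"
      using s pg by (auto simp: e_def t_def shift_cases grid_def)
    moreover have "1 \<le> t - s" using s by simp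
    then have "\<not> is_sink c sink (shift p North (int (t - s)))" using False by blast
    ultimately show "\<not> other_sink c sink 0 (shift (fst e) (snd e) (int s))"
      by (auto simp: other_sink_def is_sink_def)
  qed
  then have "freeok 0 p" using eb c1 by (auto simp: freeok_def)
  then show ?thesis by blast
next
  case True
  define s0 where "s0 = (LEAST s::nat. 1 \<le> s \<and> is_sink c sink (shift p North (int s)))"
  have s0: "1 \<le> s0 \<and> is_sink c sink (shift p North (int s0))"
    using True unfolding s0_def by (metis (mono_tags, lifting) LeastI)
  have nb: "\<And>s. s < s0 \<Longrightarrow> \<not> (1 \<le> s \<and> is_sink c sink (shift p North (int s)))"
    unfolding s0_def by (rule not_less_Least)
  obtain j where j: "j < c" "sink j = shift p North (int s0)" using s0 by (auto simp: is_sink_def)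
  have "cells_visible c sink j p (sink j)"
    unfolding visible_ray
  proof (intro exI[of _ North] exI[of _ s0] conjI allI impI)
    fix s :: nat assume "0 < s \<and> s < s0"
    then have "\<not> is_sink c sink (shift p North (int s))" using nb by auto
    then show "\<not> other_sink c sink j (shift p North (int s))"
      by (auto simp: other_sink_def is_sink_def)
  qed (use s0 j in auto)
  then have "freeok j p" using j by (auto simp: freeok_def)
  then show ?thesis by blast
qed

lemma colf_nonsink:
  assumes pg: "p \<in> grid m n" and ns: "\<not> is_sink c sink p"
  shows "(\<exists>d. L p = Some (colf p, d) \<and> visited (colf p) p) \<or> freeok (colf p) p"
proof -
  have f: "freeok (SOME i. freeok i p) p" using free_ex[OF pg ns] by (rule someI_ex)
  show ?thesis
  proof (cases "L p")
    case None
    then show ?thesis using f ns by (simp add: colf_def)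
  next
    case (Some ad)
    then obtain a d where ad: "L p = Some (a, d)" by (cases ad) auto
    then show ?thesis using f ns by (cases "visited a p") (auto simp: colf_def)
  qed
qed

lemma colf_lt: "p \<in> grid m n \<Longrightarrow> colf p < c"
proof -
  assume pg: "p \<in> grid m n"
  show ?thesis
  proof (cases "is_sink c sink p")
    case True
    then obtain j where "j < c" "sink j = p" by (auto simp: is_sink_def)
    then show ?thesis using colf_sink by auto
  next
    case False
    from colf_nonsink[OF pg False] show ?thesis
    proof
      assume "\<exists>d. L p = Some (colf p, d) \<and> visited (colf p) p"
      then show ?thesis using valid by blast
    qed (simp add: freeok_def)
  qed
qed

lemma coloring: "coloring m n c sink colf"
  using colf_lt colf_sink by (simp add: coloring_def)

end



context bdl begin


definition rayinv :: "nat \<Rightarrow> (int \<times> int) + ((int \<times> int) \<times> dir) \<Rightarrow> int \<times> int \<Rightarrow> dir \<Rightarrow> bool" where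
  "rayinv i a x d = (case a of
      Inr e \<Rightarrow> e \<in> boundary_edges m n \<and> snd e = d \<and> (\<exists>t::nat. x = shift (fst e) d (int t) \<and>
          (\<forall>s::nat. s<t \<longrightarrow> \<not> other_sink c sink i (shift (fst e) d (int s))))
    | Inl q \<Rightarrow> q \<in> color_class m n colf i \<and> (\<exists>t::nat. t \<ge> 1 \<and> x = shift q d (int t) \<and>
          (\<forall>s::nat. 0<s \<and> s<t \<longrightarrow> \<not> other_sink c sink i (shift q d (int s)))))"

lemma ray_adj:
  assumes "rayinv i a x d" "x \<in> color_class m n colf i"
  shows "G_adj m n c sink colf i a (Inl x)"
proof (cases a)
  case (Inl q)
  have r: "q \<in> color_class m n colf i \<and> (\<exists>t::nat. t \<ge> 1 \<and> x = shift q d (int t) \<and>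
          (\<forall>s::nat. 0<s \<and> s<t \<longrightarrow> \<not> other_sink c sink i (shift q d (int s))))"
    using assms(1) Inl by (simp add: rayinv_def)
  then have "cells_visible c sink i q x" unfolding visible_ray by blast
  then show ?thesis using assms(2) r Inl by (simp add: G_adj_def)
next
  case (Inr e)
  have r: "e \<in> boundary_edges m n \<and> snd e = d \<and> (\<exists>t::nat. x = shift (fst e) d (int t) \<and>
          (\<forall>s::nat. s<t \<longrightarrow> \<not> other_sink c sink i (shift (fst e) d (int s))))"
    using assms(1) Inr by (simp add: rayinv_def)
  then have "edge_visible c sink i x e" unfolding edge_vis_nat by blast
  then show ?thesis using assms(2) r Inr by (simp add: G_adj_def)
qed

lemma nonsink_nonother: "\<not> is_sink c sink x \<Longrightarrow> \<not> other_sink c sink i x"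
  by (auto simp: is_sink_def other_sink_def)

lemma traj_inv:
  assumes i: "i < c" and e: "e \<in> boundary_edges m n"
  shows "(\<forall>j'<j. fst (traj L i e j') \<in> grid m n \<and> \<not> is_sink c sink (fst (traj L i e j'))) \<Longrightarrow>
    \<exists>a. (G_adj m n c sink colf i)\<^sup>*\<^sup>* (Inr e) a \<and> rayinv i a (fst (traj L i e j)) (snd (traj L i e j))"
proof (induction j)
  case 0
  show ?case using e
    by (intro exI[of _ "Inr e"]) (auto simp: rayinv_def intro: exI[of _ 0])
next
  case (Suc j)
  obtain x d where xd: "traj L i e j = (x, d)" by (cases "traj L i e j") auto
  have "fst (traj L i e j) \<in> grid m n \<and> \<not> is_sink c sink (fst (traj L i e j))"
    using Suc.prems[rule_format, OF lessI] .
  then have gj: "x \<in> grid m n" "\<not> is_sink c sink x" using xd by auto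
  obtain a where a: "(G_adj m n c sink colf i)\<^sup>*\<^sup>* (Inr e) a" "rayinv i a x d" using Suc xd by auto
  show ?case
  proof (cases "\<exists>d''. L x = Some (i, d'')")
    case True
    then obtain d'' where d'': "L x = Some (i, d'')" by blast
    have vis: "visited i x" unfolding visited_def
    proof (intro bexI[OF _ e] exI[of _ j] conjI allI impI)
      show "fst (traj L i e j) = x" using xd by simp
      fix j' assume "j' \<le> j"
      then show "fst (traj L i e j') \<in> grid m n" "\<not> is_sink c sink (fst (traj L i e j'))"
        using Suc.prems by (metis le_imp_less_Suc)+
    qed
    have "colf x = i" using gj(2) d'' vis by (simp add: colf_def)
    then have xc: "x \<in> color_class m n colf i" using gj by (simp add: color_class_def)
    have r: "(G_adj m n c sink colf i)\<^sup>*\<^sup>* (Inr e) (Inl x)" using a(1) ray_adj[OF a(2) xc] by (rule rtranclp.rtrancl_into_rtrancl)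
    have step: "traj L i e (Suc j) = (shift x d'' 1, d'')"
      using xd d'' by (simp add: traj_Suc pstep_def eff_dir_def Let_def)
    have "rayinv i (Inl x) (shift x d'' 1) d''"
      unfolding rayinv_def using xc by (simp, intro exI[of _ 1]) simp
    then show ?thesis using r step by auto
  next
    case False
    have ed: "eff_dir L i x d = d"
    proof (cases "L x")
      case None then show ?thesis by (simp add: eff_dir_def)
    next
      case (Some ad)
      then obtain a' d' where "L x = Some (a', d')" by (cases ad) auto
      moreover have "a' \<noteq> i" using False calculation by blast
      ultimately show ?thesis by (simp add: eff_dir_def)
    qed
    have step: "traj L i e (Suc j) = (shift x d 1, d)"
      using xd ed by (simp add: traj_Suc pstep_def Let_def)
    have no: "\<not> other_sink c sink i x" using gj(2) nonsink_nonother by blast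
    have "rayinv i a (shift x d 1) d"
    proof (cases a)
      case (Inl q)
      then obtain t where t: "q \<in> color_class m n colf i" "t \<ge> 1" "x = shift q d (int t)"
        "\<forall>s::nat. 0<s \<and> s<t \<longrightarrow> \<not> other_sink c sink i (shift q d (int s))"
        using a(2) by (auto simp: rayinv_def)
      show ?thesis unfolding Inl rayinv_def
      proof (simp, intro conjI exI[of _ "Suc t"] allI impI)
        show "q \<in> color_class m n colf i" by (rule t(1))
        show "shift x d 1 = shift q d (int (Suc t))" using t(3) by (simp add: shift_add add.commute)
        fix s :: nat assume "0 < s \<and> s < Suc t"
        then show "\<not> other_sink c sink i (shift q d (int s))"
          using t(3,4) no by (cases "s = t") auto
      qed (use t in auto)
    next
      case (Inr e')
      then obtain t where t: "e' \<in> boundary_edges m n" "snd e' = d" "x = shift (fst e') d (int t)"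
        "\<forall>s::nat. s<t \<longrightarrow> \<not> other_sink c sink i (shift (fst e') d (int s))"
        using a(2) by (auto simp: rayinv_def)
      show ?thesis unfolding Inr rayinv_def
      proof (simp, intro conjI exI[of _ "Suc t"] allI impI)
        show "shift x d 1 = shift (fst e') d (int (Suc t))" using t(3) by (simp add: shift_add add.commute)
        fix s :: nat assume "s < Suc t"
        then show "\<not> other_sink c sink i (shift (fst e') d (int s))"
          using t(3,4) no by (cases "s = t") auto
      qed (use t in auto)
    qed
    then show ?thesis using a(1) step by auto
  qed
qed

end



context bdl begin

lemma sink_cc: "i < c \<Longrightarrow> sink i \<in> color_class m n colf i"
  by (simp add: color_class_def sink_grid colf_sink)

lemma edge_conn:
  assumes i: "i < c" and e: "e \<in> boundary_edges m n"
  shows "(G_adj m n c sink colf i)\<^sup>*\<^sup>* (Inr e) (Inl (sink i))"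
proof -
  have "succeeds m n c sink L i e" using perf i e by (simp add: perfect_layout_def)
  then obtain k where k: "fst (traj L i e k) = sink i"
    "\<forall>j<k. fst (traj L i e j) \<in> grid m n \<and> \<not> is_sink c sink (fst (traj L i e j))"
    by (auto simp: succeeds_def)
  obtain a where a: "(G_adj m n c sink colf i)\<^sup>*\<^sup>* (Inr e) a"
    "rayinv i a (fst (traj L i e k)) (snd (traj L i e k))"
    using traj_inv[OF i e k(2)] by blast
  have "G_adj m n c sink colf i a (Inl (sink i))"
    using ray_adj[OF a(2)] k(1) sink_cc[OF i] by simp
  then show ?thesis using a(1) by (rule rtranclp.rtrancl_into_rtrancl[rotated])
qed

lemma visited_conn:
  assumes i: "i < c" and v: "visited i p" and pc: "p \<in> color_class m n colf i"
  shows "\<exists>e\<in>boundary_edges m n. (G_adj m n c sink colf i)\<^sup>*\<^sup>* (Inr e) (Inl p)"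
proof -
  obtain e j where e: "e \<in> boundary_edges m n" "fst (traj L i e j) = p"
    "\<forall>j'\<le>j. fst (traj L i e j') \<in> grid m n \<and> \<not> is_sink c sink (fst (traj L i e j'))"
    using v by (auto simp: visited_def)
  have "\<forall>j'<j. fst (traj L i e j') \<in> grid m n \<and> \<not> is_sink c sink (fst (traj L i e j'))"
    using e(3) by auto
  from traj_inv[OF i e(1) this] obtain a where a: "(G_adj m n c sink colf i)\<^sup>*\<^sup>* (Inr e) a"
    "rayinv i a (fst (traj L i e j)) (snd (traj L i e j))" by blast
  have "G_adj m n c sink colf i a (Inl p)"
    using ray_adj[OF a(2)] e(2) pc by simp
  then have "(G_adj m n c sink colf i)\<^sup>*\<^sup>* (Inr e) (Inl p)"
    using a(1) by (rule rtranclp.rtrancl_into_rtrancl[rotated])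
  then show ?thesis using e(1) by blast
qed

lemma Gsym: "(G_adj m n c sink colf i)\<^sup>*\<^sup>* x y \<Longrightarrow> (G_adj m n c sink colf i)\<^sup>*\<^sup>* y x"
  by (rule rtranclp_sym_adj[OF G_adj_sym])

lemma bd_nonempty: "i < c \<Longrightarrow> ((0::int, 0::int), East) \<in> boundary_edges m n"
  using sink_grid[of i] by (auto simp: boundary_edges_def grid_def)

lemma to_sink:
  assumes i: "i < c" and v: "v \<in> G_vertices m n colf i"
  shows "(G_adj m n c sink colf i)\<^sup>*\<^sup>* v (Inl (sink i))"
proof (cases v)
  case (Inr e)
  then show ?thesis using v edge_conn[OF i] by (auto simp: G_vertices_def)
next
  case (Inl p)
  then have pc: "p \<in> color_class m n colf i" using v by (auto simp: G_vertices_def)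
  then have pg: "p \<in> grid m n" and cp: "colf p = i" by (auto simp: color_class_def)
  show ?thesis
  proof (cases "is_sink c sink p")
    case True
    then obtain j where "j < c" "sink j = p" by (auto simp: is_sink_def)
    then have "p = sink i" using cp colf_sink by auto
    then show ?thesis using Inl by simp
  next
    case ns: False
    from colf_nonsink[OF pg ns] show ?thesis
    proof
      assume "\<exists>d. L p = Some (colf p, d) \<and> visited (colf p) p"
      then have "visited i p" using cp by auto
      from visited_conn[OF i this pc] obtain e where e: "e \<in> boundary_edges m n"
        "(G_adj m n c sink colf i)\<^sup>*\<^sup>* (Inr e) (Inl p)" by blast
      show ?thesis using Gsym[OF e(2)] edge_conn[OF i e(1)] Inl by (metis rtranclp_trans)
    next
      assume "freeok (colf p) p"
      then have f: "(\<exists>e\<in>boundary_edges m n. edge_visible c sink i p e) \<or> cells_visible c sink i p (sink i)"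
        using cp by (simp add: freeok_def)
      then show ?thesis
      proof
        assume "\<exists>e\<in>boundary_edges m n. edge_visible c sink i p e"
        then obtain e where e: "e \<in> boundary_edges m n" "edge_visible c sink i p e" by blast
        then have "G_adj m n c sink colf i (Inl p) (Inr e)" using pc by (simp add: G_adj_def)
        then show ?thesis using edge_conn[OF i e(1)] Inl by (metis converse_rtranclp_into_rtranclp)
      next
        assume "cells_visible c sink i p (sink i)"
        then have "G_adj m n c sink colf i (Inl p) (Inl (sink i))" using pc sink_cc[OF i]
          by (simp add: G_adj_def)
        then show ?thesis using Inl by auto
      qed
    qed
  qed
qed

lemma connected: "i < c \<Longrightarrow> G_connected m n c sink colf i"
  unfolding G_connected_def using to_sink Gsym by (metis rtranclp_trans)

lemma result: "\<exists>col. coloring m n c sink col \<and> (\<forall>i<c. G_connected m n c sink col i)"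
  using coloring connected by blast

end

theorem mainTheorem8:
  fixes m n c :: nat and sink :: "nat \<Rightarrow> int \<times> int"
  assumes "board m n c sink" and "1 \<le> c"
  shows "(\<exists>L. perfect_layout m n c sink L) \<longleftrightarrow>
         (\<exists>col. coloring m n c sink col \<and> (\<forall>i<c. G_connected m n c sink col i))"
proof
  assume "\<exists>L. perfect_layout m n c sink L"
  then obtain L where L: "perfect_layout m n c sink L" by blast
  interpret bdl m n c sink L using assms L by unfold_locales
  show "\<exists>col. coloring m n c sink col \<and> (\<forall>i<c. G_connected m n c sink col i)" by (rule result)
next
  assume "\<exists>col. coloring m n c sink col \<and> (\<forall>i<c. G_connected m n c sink col i)"
  then obtain col where col: "coloring m n c sink col" "\<forall>i<c. G_connected m n c sink col i" by blast
  interpret bdc m n c sink col using assms col by unfold_locales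
  show "\<exists>L. perfect_layout m n c sink L" using perfect by blast
qed

end
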